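(* Let $q\in\mathbb{C}[x_0,\dots,x_3]_2$ be a quadratic form of rank four. Let $l\in S_1$ and let $q_l\in T_2$ be such that $q_l(q^2)=l^2$. Then $q_l\in\langle q^{-1},p_l^2\rangle$. In particular, $\{q_l=0\}$ is tangent to $Q^{-1}$ along their intersection, i.e. along the conic section $\{p_l=q^{-1}=0\}$, where $\{p_l=0\}$ is the polar plane to $[l]$ with respect to $Q^{-1}$.
   Context: $S=\mathbb{C}[x_0,\dots,x_3]$, $T=\mathbb{C}[y_0,\dots,y_3]$; $T$ acts on $S$ and $S$ acts on $T$ by differentiation. $q^{-1}\in T_2$ is the inverse quadric: the quadric such that $S_1\to T_1$, $l\mapsto l(q^{-1})$, is inverse to $T_1\to S_1$, $g\mapsto g(q)$ (e.g. $q=x_0x_1+x_2x_3$, $q^{-1}=y_0y_1+y_2y_3$). $Q^{-1}=\{q^{-1}=0\}\subset\mathbb{P}(S_1)$ and $p_l=l(q^{-1})\in T_1$, so that $p_l(q)=l$. *)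

theory Defs
  imports "HOL-Combinatorics.Permutations" Complex_Main
begin

text \<open>Polynomials in four variables over the complex numbers, represented by their
coefficient functions: a polynomial is a map from exponent vectors
(functions nat => nat, variable index i < 4) to complex coefficients.
The same representation is used for S = C[x0..x3] and T = C[y0..y3].\<close>

type_synonym cpoly = "(nat \<Rightarrow> nat) \<Rightarrow> complex"

definition is_mono :: "(nat \<Rightarrow> nat) \<Rightarrow> bool" where
  "is_mono a \<longleftrightarrow> (\<forall>i\<ge>4. a i = 0)"

definition mdeg :: "(nat \<Rightarrow> nat) \<Rightarrow> nat" where
  "mdeg a = (\<Sum>i<4. a i)"

definition is_form :: "nat \<Rightarrow> cpoly \<Rightarrow> bool" where
  "is_form d f \<longleftrightarrow> (\<forall>a. f a \<noteq> 0 \<longrightarrow> is_mono a \<and> mdeg a = d)"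

definition pmult :: "cpoly \<Rightarrow> cpoly \<Rightarrow> cpoly" where
  "pmult f g = (\<lambda>a. \<Sum>b\<in>{b. \<forall>i. b i \<le> a i}. f b * g (\<lambda>i. a i - b i))"

definition var :: "nat \<Rightarrow> cpoly" where
  "var i = (\<lambda>a. if a = (\<lambda>j. if j = i then 1 else 0) then 1 else 0)"

text \<open>Apolarity action: g acts on f by differentiation, i.e. the monomial y^b acts
as the differential operator d^b/dx^b, so x^(c+b) maps to ((c+b)!/c!) x^c.
The action of S on T is given by the same formula.\<close>
definition act :: "cpoly \<Rightarrow> cpoly \<Rightarrow> cpoly" where
  "act g f = (\<lambda>c. \<Sum>b\<in>{b. g b \<noteq> 0}.
       g b * f (\<lambda>i. c i + b i) * (\<Prod>i<4. (fact (c i + b i) / fact (c i) :: complex)))"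

definition peval :: "cpoly \<Rightarrow> (nat \<Rightarrow> complex) \<Rightarrow> complex" where
  "peval f v = (\<Sum>a\<in>{a. f a \<noteq> 0}. f a * (\<Prod>i<4. v i ^ a i))"

text \<open>Symmetric matrix of second partial derivatives of a quadratic form (constant).\<close>
definition hess :: "cpoly \<Rightarrow> nat \<Rightarrow> nat \<Rightarrow> complex" where
  "hess q i j = act (pmult (var i) (var j)) q (\<lambda>_. 0)"

text \<open>Rank four (full rank) of a quadratic form in four variables: its 4x4 matrix
has nonzero determinant (Leibniz formula).\<close>
definition qf_rank4 :: "cpoly \<Rightarrow> bool" where
  "qf_rank4 q \<longleftrightarrow>
     (\<Sum>p | p permutes {..<4}. of_int (sign p) * (\<Prod>i<4. hess q i (p i))) \<noteq> (0::complex)"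

text \<open>r is the inverse quadric of q: l |-> l(r) (S_1 -> T_1) and g |-> g(q) (T_1 -> S_1)
are mutually inverse.\<close>
definition is_inv_quadric :: "cpoly \<Rightarrow> cpoly \<Rightarrow> bool" where
  "is_inv_quadric q r \<longleftrightarrow> is_form 2 r \<and>
     (\<forall>g. is_form 1 g \<longrightarrow> act (act g q) r = g) \<and>
     (\<forall>l. is_form 1 l \<longrightarrow> act (act l r) q = l)"

end

theory Submission
  imports Defs
begin


definition ad :: "(nat \<Rightarrow> nat) \<Rightarrow> (nat \<Rightarrow> nat) \<Rightarrow> nat \<Rightarrow> nat" where
  "ad x y = (\<lambda>i. x i + y i)"
definition sb :: "(nat \<Rightarrow> nat) \<Rightarrow> (nat \<Rightarrow> nat) \<Rightarrow> nat \<Rightarrow> nat" where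
  "sb x y = (\<lambda>i. x i - y i)"
definition e :: "nat \<Rightarrow> nat \<Rightarrow> nat" where
  "e i = (\<lambda>j. if j = i then 1 else 0)"
definition fins :: "(nat \<Rightarrow> nat) \<Rightarrow> bool" where
  "fins c \<longleftrightarrow> (\<exists>N. \<forall>k\<ge>N. c k = 0)"
definition le :: "(nat \<Rightarrow> nat) \<Rightarrow> (nat \<Rightarrow> nat) \<Rightarrow> bool" where
  "le b a \<longleftrightarrow> (\<forall>k. b k \<le> a k)"

lemma pmult_alt: "pmult f g a = (\<Sum>b\<in>{b. le b a}. f b * g (sb a b))"
  by (simp add: pmult_def le_def sb_def)

lemma finite_le:
  assumes "fins a" shows "finite {b. le b a}"
proof -
  obtain N where N: "\<forall>k\<ge>N. a k = 0" using assms fins_def by auto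
  define M where "M = (\<Sum>k<N. a k)"
  have ak: "a k \<le> M" if "k < N" for k
    unfolding M_def using that by (intro member_le_sum) auto
  have inj: "inj_on (\<lambda>b. map b [0..<N]) {b. le b a}"
  proof (rule inj_onI)
    fix x y assume x: "x \<in> {b. le b a}" and y: "y \<in> {b. le b a}"
      and eq: "map x [0..<N] = map y [0..<N]"
    show "x = y"
    proof
      fix k show "x k = y k"
      proof (cases "k < N")
        case True
        then show ?thesis using eq by simp
      next
        case False then have "a k = 0" using N by auto
        moreover have "x k \<le> a k" "y k \<le> a k" using x y by (auto simp: le_def)
        ultimately show ?thesis by simp
      qed
    qed
  qed
  have "(\<lambda>b. map b [0..<N]) ` {b. le b a} \<subseteq> {xs. set xs \<subseteq> {..M} \<and> length xs = N}"
    using ak unfolding le_def by clarsimp (meson le_trans)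
  then have "finite ((\<lambda>b. map b [0..<N]) ` {b. le b a})"
    by (rule finite_subset) (simp add: finite_lists_length_eq)
  then show ?thesis using inj finite_imageD by blast
qed

lemma fins_ad: "fins x \<Longrightarrow> fins y \<Longrightarrow> fins (ad x y)"
  unfolding fins_def ad_def by (metis add_is_0 le_trans nat_le_linear)

lemma fins_e: "fins (e i)"
  unfolding fins_def e_def by (rule exI[of _ "Suc i"]) auto

lemma fins_z: "fins (\<lambda>_. 0)"
  unfolding fins_def by auto

lemma var_e: "var i = (\<lambda>a. if a = e i then 1 else 0)"
  by (simp add: var_def e_def)

lemma prod_e:
  assumes "i < 4"
  shows "(\<Prod>k<4. (fact (c k + e i k) / fact (c k) :: complex)) = of_nat (c i + 1)"
proof -
  have "(\<Prod>k<4. (fact (c k + e i k) / fact (c k) :: complex)) =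
        (fact (c i + e i i) / fact (c i)) * (\<Prod>k\<in>{..<4}-{i}. (fact (c k + e i k) / fact (c k) :: complex))"
    using assms by (subst prod.remove[of _ i]) auto
  also have "(\<Prod>k\<in>{..<4}-{i}. (fact (c k + e i k) / fact (c k) :: complex)) = 1"
    by (rule prod.neutral) (auto simp: e_def)
  also have "(fact (c i + e i i) / fact (c i) :: complex) = of_nat (c i + 1)"
    by (simp add: e_def fact_Suc del: of_nat_Suc)
  finally show ?thesis by simp
qed

lemma act_var:
  assumes "i < 4"
  shows "act (var i) f c = f (ad c (e i)) * of_nat (c i + 1)"
proof -
  have "{b. var i b \<noteq> 0} = {e i}" by (auto simp: var_e)
  then show ?thesis using prod_e[OF assms, of c]
    by (simp add: act_def var_e ad_def)
qed



lemma leibniz: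
  assumes fc: "fins c" and i: "i < 4"
  shows "act (var i) (pmult f g) c = pmult (act (var i) f) g c + pmult f (act (var i) g) c"
proof -
  define ci where "ci = ad c (e i)"
  define B where "B = {b. le b ci}"
  define B' where "B' = {b. le b c}"
  have fB: "finite B" unfolding B_def ci_def by (rule finite_le) (simp add: fins_ad fins_e fc)
  have fB': "finite B'" unfolding B'_def by (rule finite_le) (simp add: fc)
  have cii: "ci i = c i + 1" by (simp add: ci_def ad_def e_def)
  define h1 where "h1 b = of_nat (b i) * (f b * g (sb ci b))" for b
  define h2 where "h2 b = of_nat (ci i - b i) * (f b * g (sb ci b))" for b
  have "act (var i) (pmult f g) c = (\<Sum>b\<in>B. f b * g (sb ci b)) * of_nat (c i + 1)"
    by (simp add: act_var[OF i] pmult_alt ci_def B_def)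
  also have "\<dots> = (\<Sum>b\<in>B. h1 b + h2 b)"
    unfolding sum_distrib_right
  proof (rule sum.cong[OF refl])
    fix b assume "b \<in> B"
    then have "b i \<le> ci i" by (simp add: B_def le_def)
    then have "(of_nat (c i + 1) :: complex) = of_nat (b i) + of_nat (ci i - b i)"
      by (simp add: cii of_nat_add[symmetric] del: of_nat_add)
    then show "f b * g (sb ci b) * of_nat (c i + 1) = h1 b + h2 b"
      by (simp add: h1_def h2_def algebra_simps)
  qed
  also have "\<dots> = sum h1 B + sum h2 B" by (simp add: sum.distrib)
  also have "sum h1 B = pmult (act (var i) f) g c"
  proof -
    have inj: "inj_on (\<lambda>b. ad b (e i)) B'"
      by (rule inj_onI) (simp add: ad_def fun_eq_iff)
    have sub: "(\<lambda>b. ad b (e i)) ` B' \<subseteq> B"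
      by (auto simp: B'_def B_def le_def ad_def ci_def)
    have "pmult (act (var i) f) g c = (\<Sum>b\<in>B'. h1 (ad b (e i)))"
      unfolding pmult_alt B'_def[symmetric]
    proof (rule sum.cong[OF refl])
      fix b assume "b \<in> B'"
      have "sb ci (ad b (e i)) = sb c b" by (simp add: sb_def ci_def ad_def fun_eq_iff)
      moreover have "ad b (e i) i = b i + 1" by (simp add: ad_def e_def)
      ultimately show "act (var i) f b * g (sb c b) = h1 (ad b (e i))"
        by (simp add: h1_def act_var[OF i] algebra_simps)
    qed
    also have "\<dots> = sum h1 ((\<lambda>b. ad b (e i)) ` B')"
      by (simp add: sum.reindex[OF inj])
    also have "\<dots> = sum h1 B"
    proof (rule sum.mono_neutral_left[OF fB sub])
      show "\<forall>b\<in>B - (\<lambda>b. ad b (e i)) ` B'. h1 b = 0"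
      proof
        fix b assume b: "b \<in> B - (\<lambda>b. ad b (e i)) ` B'"
        show "h1 b = 0"
        proof (cases "b i = 0")
          case True then show ?thesis by (simp add: h1_def)
        next
          case False
          have "ad (sb b (e i)) (e i) = b" using False by (auto simp: ad_def sb_def e_def fun_eq_iff)
          moreover have "sb b (e i) \<in> B'" using b False
            by (auto simp: B_def B'_def le_def sb_def ci_def ad_def e_def split: if_splits)
          ultimately show ?thesis using b by (metis DiffD2 image_eqI)
        qed
      qed
    qed
    finally show ?thesis by simp
  qed
  also have "sum h2 B = pmult f (act (var i) g) c"
  proof -
    have sub: "B' \<subseteq> B" by (auto simp: B'_def B_def le_def ci_def ad_def intro: trans_le_add1)
    have "pmult f (act (var i) g) c = sum h2 B'"
      unfolding pmult_alt B'_def[symmetric]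
    proof (rule sum.cong[OF refl])
      fix b assume "b \<in> B'"
      then have bc: "b i \<le> c i" by (simp add: B'_def le_def)
      then have "sb ci b = ad (sb c b) (e i)" using \<open>b \<in> B'\<close>
        by (auto simp: sb_def ci_def ad_def e_def fun_eq_iff B'_def le_def)
      moreover have "ci i - b i = sb c b i + 1" using bc by (simp add: cii sb_def)
      ultimately show "f b * act (var i) g (sb c b) = h2 b"
        by (simp add: h2_def act_var[OF i] algebra_simps)
    qed
    also have "\<dots> = sum h2 B"
    proof (rule sum.mono_neutral_left[OF fB sub])
      show "\<forall>b\<in>B - B'. h2 b = 0"
      proof
        fix b assume b: "b \<in> B - B'"
        have "b i = ci i"
        proof (rule ccontr)
          assume "b i \<noteq> ci i"
          moreover have "b i \<le> ci i" using b by (simp add: B_def le_def)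
          ultimately have "b i \<le> c i" using cii by linarith
          moreover have "b k \<le> c k" if "k \<noteq> i" for k
          proof -
            have "b k \<le> ci k" using b by (simp add: B_def le_def)
            then show ?thesis using that by (simp add: ci_def ad_def e_def)
          qed
          ultimately have "b \<in> B'" by (auto simp: B'_def le_def) (metis)
          then show False using b by simp
        qed
        then show "h2 b = 0" by (simp add: h2_def)
      qed
    qed
    finally show ?thesis by simp
  qed
  finally show ?thesis .
qed



lemma sum4: "(\<Sum>k<(4::nat). f k) = f 0 + f 1 + f 2 + (f 3 :: 'a::comm_monoid_add)"
  by (simp add: numeral_eq_Suc lessThan_Suc ac_simps)
lemma prod4: "(\<Prod>k<(4::nat). f k) = f 0 * f 1 * f 2 * (f 3 :: 'a::comm_monoid_mult)"
  by (simp add: numeral_eq_Suc lessThan_Suc ac_simps)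
lemma less4: "(a::nat) < 4 \<Longrightarrow> a = 0 \<or> a = 1 \<or> a = 2 \<or> a = 3" by arith

lemma mdeg_ad: "mdeg (ad x y) = mdeg x + mdeg y"
  by (simp add: mdeg_def ad_def sum.distrib)
lemma mdeg_e: "i < 4 \<Longrightarrow> mdeg (e i) = 1"
  by (simp add: mdeg_def e_def)
lemma mdeg_z: "mdeg (\<lambda>_. 0) = 0"
  by (simp add: mdeg_def)
lemma is_mono_e: "i < 4 \<Longrightarrow> is_mono (e i)"
  by (simp add: is_mono_def e_def)
lemma is_mono_ad: "is_mono x \<Longrightarrow> is_mono y \<Longrightarrow> is_mono (ad x y)"
  by (simp add: is_mono_def ad_def)

lemma form_zero: "is_form d f \<Longrightarrow> mdeg m \<noteq> d \<Longrightarrow> f m = 0"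
  by (auto simp: is_form_def)

lemma mono0: "is_mono a \<Longrightarrow> mdeg a = 0 \<Longrightarrow> a = (\<lambda>_. 0)"
  unfolding is_mono_def mdeg_def fun_eq_iff
  by (metis finite_lessThan lessThan_iff not_le sum_eq_0_iff)

lemma mono_pos: assumes "mdeg a > 0" shows "\<exists>j<4. a j > 0"
proof (rule ccontr)
  assume "\<not> ?thesis"
  then have "\<forall>j\<in>{..<4}. a j = 0" by auto
  then have "mdeg a = 0" unfolding mdeg_def by (rule sum.neutral)
  with assms show False by simp
qed

lemma mono_split:
  assumes "is_mono a" "mdeg a = Suc n"
  shows "\<exists>j<4. is_mono (sb a (e j)) \<and> mdeg (sb a (e j)) = n \<and> a = ad (sb a (e j)) (e j)"
proof -
  have "mdeg a > 0" using assms(2) by simp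
  then obtain j where j: "j < 4" "a j > 0" using mono_pos by blast
  have eq: "a = ad (sb a (e j)) (e j)" using j by (auto simp: ad_def sb_def e_def fun_eq_iff)
  have "is_mono (sb a (e j))" using assms(1) by (simp add: is_mono_def sb_def)
  moreover have "mdeg (sb a (e j)) = n"
    using arg_cong[OF eq, of mdeg] assms(2) by (simp add: mdeg_ad mdeg_e j)
  ultimately show ?thesis using j eq by blast
qed

lemma mono1: assumes "is_mono a" "mdeg a = 1" shows "\<exists>j<4. a = e j"
proof -
  obtain j where j: "j < 4" "is_mono (sb a (e j))" "mdeg (sb a (e j)) = 0" "a = ad (sb a (e j)) (e j)"
    using mono_split[of a 0] assms by auto
  then have "sb a (e j) = (\<lambda>_. 0)" using mono0 by blast
  then have "a = e j" using j(4) by (simp add: ad_def)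
  then show ?thesis using j(1) by blast
qed

lemma mono2: "is_mono a \<Longrightarrow> mdeg a = 2 \<Longrightarrow> \<exists>j<4. \<exists>k<4. a = ad (e j) (e k)"
proof -
  assume "is_mono a" "mdeg a = 2"
  then obtain j where j: "j < 4" "is_mono (sb a (e j))" "mdeg (sb a (e j)) = 1" "a = ad (sb a (e j)) (e j)"
    using mono_split[of a 1] by (auto simp: numeral_2_eq_2)
  then obtain k where "k < 4" "sb a (e j) = e k" using mono1 by blast
  then show ?thesis using j by (metis)
qed

lemma e_inj: "e a = e b \<longleftrightarrow> a = b"
  by (metis e_def one_neq_zero)

lemma ad_e_eq: "ad (e a) (e b) = ad (e c) (e d) \<longleftrightarrow> (a = c \<and> b = d) \<or> (a = d \<and> b = c)"
proof
  assume h: "ad (e a) (e b) = ad (e c) (e d)"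
  have v: "\<And>k. e a k + e b k = e c k + e d k" using h by (simp add: ad_def fun_eq_iff)
  have va: "1 + (if a = b then 1 else 0) = (if a = c then 1 else 0) + (if a = d then (1::nat) else 0)"
    using v[of a] by (simp add: e_def)
  have vb: "(if b = a then 1 else 0) + 1 = (if b = c then 1 else 0) + (if b = d then (1::nat) else 0)"
    using v[of b] by (simp add: e_def)
  have "a = c \<or> a = d" using va by (cases "a = c"; cases "a = d") simp_all
  then show "(a = c \<and> b = d) \<or> (a = d \<and> b = c)"
  proof
    assume ac: "a = c"
    show ?thesis using vb ac by (cases "b = a"; cases "b = d") simp_all
  next
    assume ad: "a = d"
    show ?thesis using vb ad by (cases "b = a"; cases "b = c") simp_all
  qed
next
  assume "(a = c \<and> b = d) \<or> (a = d \<and> b = c)"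
  then show "ad (e a) (e b) = ad (e c) (e d)" by (auto simp: ad_def fun_eq_iff)
qed

lemma sum_pairs:
  assumes "a0 < 4" "b0 < 4"
  shows "(\<Sum>a<4. \<Sum>b<4. if ad (e a0) (e b0) = ad (e a) (e b) then X a b else 0) =
    (if a0 = b0 then X a0 a0 else X a0 b0 + X b0 a0)"
  using less4[OF assms(1)] less4[OF assms(2)]
  by (elim disjE) (simp_all add: sum4 ad_e_eq add.commute)



lemma fr1: "(fact (n + 1) / fact n :: complex) = of_nat (n + 1)"
  by (simp add: fact_Suc del: of_nat_Suc)
lemma fr2: "(fact (n + 2) / fact n :: complex) = of_nat (n + 2) * of_nat (n + 1)"
  by (simp add: numeral_2_eq_2 fact_Suc del: of_nat_Suc)

lemma facp2:
  assumes "a < 4" "b < 4"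
  shows "(\<Prod>k<4. fact (c k + ad (e a) (e b) k) / fact (c k) :: complex) =
     of_nat (c a + 1) * of_nat (c b + (if a = b then 1 else 0) + 1)"
  using less4[OF assms(1)] less4[OF assms(2)]
  by (auto simp: prod4 ad_def e_def fr1 fr2 ac_simps)

lemma act_alt: "act g f c = (\<Sum>b\<in>{b. g b \<noteq> 0}. g b * f (ad c b) *
       (\<Prod>i<4. (fact (c i + b i) / fact (c i) :: complex)))"
  by (simp add: act_def ad_def)

lemma ad_z: "ad (\<lambda>_. 0) x = x" by (simp add: ad_def)
lemma ad_comm: "ad x y = ad y x" by (simp add: ad_def add.commute)
lemma ad_assoc: "ad (ad x y) w = ad x (ad y w)" by (simp add: ad_def add.assoc)

lemma pmult_var2: "pmult (var a) (var b) = (\<lambda>m. if m = ad (e a) (e b) then 1 else 0)"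
proof
  fix m
  show "pmult (var a) (var b) m = (if m = ad (e a) (e b) then 1 else 0)"
  proof (cases "m = ad (e a) (e b)")
    case True
    have fin: "finite {x. le x m}" using True by (intro finite_le) (simp add: fins_ad fins_e)
    have "pmult (var a) (var b) m = (\<Sum>x\<in>{x. le x m}. if x = e a then var b (sb m (e a)) else 0)"
      unfolding pmult_alt by (rule sum.cong) (auto simp: var_e)
    also have "\<dots> = var b (sb m (e a))"
      using fin True by (subst sum.delta) (auto simp: le_def ad_def)
    also have "sb m (e a) = e b" using True by (simp add: sb_def ad_def fun_eq_iff)
    finally show ?thesis using True by (simp add: var_e)
  next
    case False
    have "pmult (var a) (var b) m = 0" unfolding pmult_alt
    proof (rule sum.neutral, rule ballI)
      fix x assume x: "x \<in> {x. le x m}"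
      show "var a x * var b (sb m x) = 0"
      proof (rule ccontr)
        assume "var a x * var b (sb m x) \<noteq> 0"
        then have "x = e a" "sb m x = e b" by (auto simp: var_e split: if_splits)
        then have "m = ad (e a) (e b)" using x
          by (auto simp: le_def sb_def ad_def fun_eq_iff) (metis le_add_diff_inverse)
        then show False using False by simp
      qed
    qed
    then show ?thesis using False by simp
  qed
qed

lemma hess_eq:
  assumes "a < 4" "b < 4"
  shows "hess f a b = f (ad (e a) (e b)) * (if a = b then 2 else 1)"
proof -
  have s: "{m. (if m = ad (e a) (e b) then 1 else 0) \<noteq> (0::complex)} = {ad (e a) (e b)}" by auto
  show ?thesis
    unfolding hess_def pmult_var2 act_alt s
    using facp2[OF assms, of "\<lambda>_. 0"] by (simp add: ad_z)
qed

lemma act_lin: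
  assumes "is_form 1 u"
  shows "act u F c = (\<Sum>j<4. u (e j) * act (var j) F c)"
proof -
  define Y where "Y b = u b * F (ad c b) * (\<Prod>i<4. (fact (c i + b i) / fact (c i) :: complex))" for b
  have sub: "{b. u b \<noteq> 0} \<subseteq> e ` {..<4}"
    using assms mono1 by (fastforce simp: is_form_def)
  have "act u F c = sum Y {b. u b \<noteq> 0}" by (simp add: act_alt Y_def)
  also have "\<dots> = sum Y (e ` {..<4})"
    by (rule sum.mono_neutral_left[OF _ sub]) (auto simp: Y_def)
  also have "\<dots> = (\<Sum>j<4. Y (e j))"
    by (rule sum.reindex_cong[of e]) (auto simp: inj_on_def e_inj)
  also have "\<dots> = (\<Sum>j<4. u (e j) * act (var j) F c)"
    by (rule sum.cong) (auto simp: Y_def act_var prod_e)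
  finally show ?thesis .
qed

lemma peval_lin:
  assumes "is_form 1 u"
  shows "peval u v = (\<Sum>j<4. u (e j) * v j)"
proof -
  define Y where "Y b = u b * (\<Prod>i<4. v i ^ b i)" for b
  have sub: "{b. u b \<noteq> 0} \<subseteq> e ` {..<4}"
    using assms mono1 by (fastforce simp: is_form_def)
  have pe: "(\<Prod>i<4. v i ^ e j i) = v j" if "j < 4" for j
  proof -
    have "(\<Prod>i<4. v i ^ e j i) = v j ^ e j j * (\<Prod>i\<in>{..<4}-{j}. v i ^ e j i)"
      using that by (subst prod.remove[of _ j]) auto
    also have "(\<Prod>i\<in>{..<4}-{j}. v i ^ e j i) = 1" by (rule prod.neutral) (auto simp: e_def)
    finally show ?thesis by (simp add: e_def)
  qed
  have "peval u v = sum Y {b. u b \<noteq> 0}" by (simp add: peval_def Y_def)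
  also have "\<dots> = sum Y (e ` {..<4})"
    by (rule sum.mono_neutral_left[OF _ sub]) (auto simp: Y_def)
  also have "\<dots> = (\<Sum>j<4. Y (e j))"
    by (rule sum.reindex_cong[of e]) (auto simp: inj_on_def e_inj)
  also have "\<dots> = (\<Sum>j<4. u (e j) * v j)"
    by (rule sum.cong) (auto simp: Y_def pe)
  finally show ?thesis .
qed

lemma quad_rep:
  assumes g: "is_form 2 g"
  shows "g m = (\<Sum>a<4. \<Sum>b<4. if m = ad (e a) (e b) then hess g a b / 2 else 0)"
proof (cases "\<exists>a0<4. \<exists>b0<4. m = ad (e a0) (e b0)")
  case True
  then obtain a0 b0 where ab: "a0 < 4" "b0 < 4" "m = ad (e a0) (e b0)" by blast
  have "(\<Sum>a<4. \<Sum>b<4. if m = ad (e a) (e b) then hess g a b / 2 else 0) =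
        (if a0 = b0 then hess g a0 a0 / 2 else hess g a0 b0 / 2 + hess g b0 a0 / 2)"
    unfolding ab(3) by (rule sum_pairs[OF ab(1,2)])
  also have "\<dots> = g m"
    using ab by (simp add: hess_eq ad_comm[of "e b0" "e a0"])
  finally show ?thesis by simp
next
  case False
  have "g m = 0"
  proof (rule ccontr)
    assume "g m \<noteq> 0"
    then have "is_mono m" "mdeg m = 2" using g by (auto simp: is_form_def)
    then show False using mono2 False by blast
  qed
  moreover have "(\<Sum>a<4. \<Sum>b<4. if m = ad (e a) (e b) then hess g a b / 2 else 0) = 0"
    using False by (intro sum.neutral ballI) auto
  ultimately show ?thesis by simp
qed

lemma act_quad:
  assumes g: "is_form 2 g"
  shows "act g F c = (\<Sum>a<4. \<Sum>b<4. hess g a b / 2 * act (var a) (act (var b) F) c)"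
proof -
  define Y where "Y b = F (ad c b) * (\<Prod>i<4. (fact (c i + b i) / fact (c i) :: complex))" for b
  define S where "S = {b. g b \<noteq> 0}"
  have sub: "S \<subseteq> (\<lambda>(a,b). ad (e a) (e b)) ` ({..<4} \<times> {..<4})"
    using g mono2 by (fastforce simp: is_form_def S_def)
  have fin: "finite S" by (rule finite_subset[OF sub]) auto
  have "act g F c = (\<Sum>m\<in>S. g m * Y m)" by (simp add: act_alt Y_def S_def mult.assoc)
  also have "\<dots> = (\<Sum>m\<in>S. \<Sum>a<4. \<Sum>b<4. if m = ad (e a) (e b) then hess g a b / 2 * Y (ad (e a) (e b)) else 0)"
  proof (rule sum.cong[OF refl])
    fix m
    show "g m * Y m = (\<Sum>a<4. \<Sum>b<4. if m = ad (e a) (e b) then hess g a b / 2 * Y (ad (e a) (e b)) else 0)"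
      by (subst quad_rep[OF g]) (auto simp: sum_distrib_right intro!: sum.cong)
  qed
  also have "\<dots> = (\<Sum>a<4. \<Sum>b<4. \<Sum>m\<in>S. if m = ad (e a) (e b) then hess g a b / 2 * Y (ad (e a) (e b)) else 0)"
    by (simp add: sum.swap[of _ S])
  also have "\<dots> = (\<Sum>a<4. \<Sum>b<4. hess g a b / 2 * Y (ad (e a) (e b)))"
  proof (intro sum.cong refl)
    fix a b :: nat assume a: "a \<in> {..<4}" and b: "b \<in> {..<4}"
    have "(\<Sum>m\<in>S. if m = ad (e a) (e b) then hess g a b / 2 * Y (ad (e a) (e b)) else 0)
        = (if ad (e a) (e b) \<in> S then hess g a b / 2 * Y (ad (e a) (e b)) else 0)"
      using fin by (simp add: sum.delta')
    also have "\<dots> = hess g a b / 2 * Y (ad (e a) (e b))"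
      using a b by (auto simp: S_def hess_eq)
    finally show "(\<Sum>m\<in>S. if m = ad (e a) (e b) then hess g a b / 2 * Y (ad (e a) (e b)) else 0)
        = hess g a b / 2 * Y (ad (e a) (e b))" .
  qed
  also have "\<dots> = (\<Sum>a<4. \<Sum>b<4. hess g a b / 2 * act (var a) (act (var b) F) c)"
  proof (intro sum.cong refl)
    fix a b :: nat assume a: "a \<in> {..<4}" and b: "b \<in> {..<4}"
    have "ad c (e a) b = c b + (if a = b then 1 else 0)" by (auto simp: ad_def e_def)
    then show "hess g a b / 2 * Y (ad (e a) (e b)) = hess g a b / 2 * act (var a) (act (var b) F) c"
      using a b by (simp add: Y_def act_var facp2 ad_assoc ac_simps)
  qed
  finally show ?thesis .
qed



lemma le_E: "{b. le b (ad (e s) (e t))} = {(\<lambda>_. 0), e s, e t, ad (e s) (e t)}"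
proof (rule set_eqI, rule iffI)
  fix b assume "b \<in> {b. le b (ad (e s) (e t))}"
  then have le: "\<And>k. b k \<le> e s k + e t k" by (simp add: le_def ad_def)
  define x where "x = b s"
  define y where "y = b t"
  have rep: "b = (\<lambda>k. if k = s then x else if k = t then y else 0)"
  proof
    fix k show "b k = (if k = s then x else if k = t then y else 0)"
      using le[of k] by (auto simp: x_def y_def e_def)
  qed
  show "b \<in> {(\<lambda>_. 0), e s, e t, ad (e s) (e t)}"
  proof (cases "s = t")
    case True
    have "x \<le> 2" using le[of s] True by (simp add: x_def e_def)
    then have "x = 0 \<or> x = 1 \<or> x = 2" by arith
    moreover have "b = (\<lambda>_. 0)" if "x = 0" using that True by (simp add: rep fun_eq_iff)
    moreover have "b = e s" if "x = 1" using that True by (simp add: rep fun_eq_iff e_def)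
    moreover have "b = ad (e s) (e t)" if "x = 2" using that True by (simp add: rep fun_eq_iff e_def ad_def)
    ultimately show ?thesis by blast
  next
    case False
    have "x \<le> 1" using le[of s] False by (simp add: x_def e_def)
    moreover have "y \<le> 1" using le[of t] False by (simp add: y_def e_def)
    ultimately have "(x = 0 \<or> x = 1) \<and> (y = 0 \<or> y = 1)" by arith
    moreover have "b = (\<lambda>_. 0)" if "x = 0" "y = 0" using that by (simp add: rep fun_eq_iff)
    moreover have "b = e s" if "x = 1" "y = 0" using that False by (simp add: rep fun_eq_iff e_def)
    moreover have "b = e t" if "x = 0" "y = 1" using that False by (simp add: rep fun_eq_iff e_def)
    moreover have "b = ad (e s) (e t)" if "x = 1" "y = 1" using that False by (simp add: rep fun_eq_iff e_def ad_def)
    ultimately show ?thesis by blast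
  qed
next
  fix b assume "b \<in> {(\<lambda>_. 0), e s, e t, ad (e s) (e t)}"
  then show "b \<in> {b. le b (ad (e s) (e t))}" by (auto simp: le_def ad_def e_def)
qed

lemma z_ne_e: "(\<lambda>_. 0) \<noteq> e i"
  by (metis e_def zero_neq_one)
lemma z_ne_E: "(\<lambda>_. 0) \<noteq> ad (e s) (e t)"
  by (metis add_is_0 ad_def e_def zero_neq_one)
lemma e_ne_E: "e i \<noteq> ad (e s) (e t)"
proof
  assume h: "e i = ad (e s) (e t)"
  have 1: "e i s = e s s + e t s" and 2: "e i t = e s t + e t t" and 3: "e i i = e s i + e t i"
    using h by (simp_all add: ad_def)
  have si: "s = i" using 1 by (cases "s = i"; simp add: e_def)
  have ti: "t = i" using 2 by (cases "t = i"; simp add: e_def)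
  show False using 1 si ti by (simp add: e_def)
qed

lemma sb_E:
  "sb (ad (e s) (e t)) (\<lambda>_. 0) = ad (e s) (e t)"
  "sb (ad (e s) (e t)) (e s) = e t"
  "sb (ad (e s) (e t)) (e t) = e s"
  "sb (ad (e s) (e t)) (ad (e s) (e t)) = (\<lambda>_. 0)"
  by (auto simp: sb_def ad_def fun_eq_iff)

lemma pmult_at2:
  "pmult u w (ad (e s) (e t)) =
    (if s = t then u (\<lambda>_. 0) * w (ad (e s) (e t)) + u (e s) * w (e s) + u (ad (e s) (e t)) * w (\<lambda>_. 0)
     else u (\<lambda>_. 0) * w (ad (e s) (e t)) + u (e s) * w (e t) + u (e t) * w (e s) + u (ad (e s) (e t)) * w (\<lambda>_. 0))"
proof (cases "s = t")
  case True
  have "pmult u w (ad (e s) (e t)) = (\<Sum>b\<in>{(\<lambda>_. 0), e s, ad (e s) (e t)}. u b * w (sb (ad (e s) (e t)) b))"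
    unfolding pmult_alt le_E using True by simp
  also have "\<dots> = u (\<lambda>_. 0) * w (ad (e s) (e t)) + u (e s) * w (e s) + u (ad (e s) (e t)) * w (\<lambda>_. 0)"
    using True by (simp add: z_ne_e z_ne_E e_ne_E sb_E add.assoc)
  finally show ?thesis using True by simp
next
  case False
  have "e s \<noteq> e t" using False e_inj by blast
  then have "pmult u w (ad (e s) (e t)) = u (\<lambda>_. 0) * w (ad (e s) (e t)) + u (e s) * w (e t) + u (e t) * w (e s) + u (ad (e s) (e t)) * w (\<lambda>_. 0)"
    unfolding pmult_alt le_E by (simp add: z_ne_e z_ne_E e_ne_E sb_E add.assoc)
  then show ?thesis using False by simp
qed

lemma mdeg_E: "s < 4 \<Longrightarrow> t < 4 \<Longrightarrow> mdeg (ad (e s) (e t)) = 2"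
  by (simp add: mdeg_ad mdeg_e)

lemma D_zero:
  assumes "is_form 2 q" "b < 4" "mdeg x \<noteq> 1"
  shows "act (var b) q x = 0"
  using assms by (simp add: act_var form_zero mdeg_ad mdeg_e)

lemma DD_zero:
  assumes "is_form 2 q" "a < 4" "b < 4" "mdeg x \<noteq> 0"
  shows "act (var a) (act (var b) q) x = 0"
  using assms by (simp add: act_var form_zero mdeg_ad mdeg_e)

lemma D_e:
  assumes "b < 4" "j < 4"
  shows "act (var b) q (e j) = hess q j b"
  using assms by (simp add: act_var hess_eq e_def)

lemma DD_z:
  assumes "a < 4" "b < 4"
  shows "act (var a) (act (var b) q) (\<lambda>_. 0) = hess q a b"
proof -
  have "act (var a) (act (var b) q) (\<lambda>_. 0) = act (var b) q (e a)"
    using assms by (simp add: act_var ad_z)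
  then show ?thesis using assms by (simp add: D_e)
qed

lemma hess_sym: "a < 4 \<Longrightarrow> b < 4 \<Longrightarrow> hess f a b = hess f b a"
  by (simp add: hess_eq ad_comm)

lemma q_E: "s < 4 \<Longrightarrow> t < 4 \<Longrightarrow> q (ad (e s) (e t)) = hess q s t / (if s = t then 2 else 1)"
  by (simp add: hess_eq)

lemma DDqq:
  assumes q: "is_form 2 q" and ab: "a < 4" "b < 4" and st: "s < 4" "t < 4"
  shows "act (var a) (act (var b) (pmult q q)) (ad (e s) (e t)) =
    (2 * hess q a b * hess q s t + 2 * hess q s a * hess q t b + 2 * hess q s b * hess q t a)
      / (if s = t then 2 else 1)"
proof -
  define E where "E = ad (e s) (e t)"
  define Db where "Db = act (var b) q"
  define Da where "Da = act (var a) q"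
  define DD where "DD = act (var a) (act (var b) q)"
  have fE: "fins E" "fins (ad E (e a))" by (simp_all add: E_def fins_ad fins_e)
  have "act (var a) (act (var b) (pmult q q)) E = act (var b) (pmult q q) (ad E (e a)) * of_nat (E a + 1)"
    using ab by (simp add: act_var)
  also have "\<dots> = (pmult Db q (ad E (e a)) + pmult q Db (ad E (e a))) * of_nat (E a + 1)"
    using leibniz[OF fE(2) ab(2)] by (simp add: Db_def)
  also have "\<dots> = act (var a) (pmult Db q) E + act (var a) (pmult q Db) E"
    using ab by (simp add: act_var distrib_right)
  also have "\<dots> = pmult DD q E + pmult Db Da E + pmult Da Db E + pmult q DD E"
    using leibniz[OF fE(1) ab(1), of Db q] leibniz[OF fE(1) ab(1), of q Db]
    by (simp add: DD_def Db_def Da_def)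
  finally have main: "act (var a) (act (var b) (pmult q q)) E =
      pmult DD q E + pmult Db Da E + pmult Da Db E + pmult q DD E" .
  have v: "q (\<lambda>_. 0) = 0" "q (e s) = 0" "q (e t) = 0"
    "Db (\<lambda>_. 0) = 0" "Da (\<lambda>_. 0) = 0" "Db E = 0" "Da E = 0"
    "DD (e s) = 0" "DD (e t) = 0" "DD E = 0"
    using q ab st
    by (simp_all add: form_zero mdeg_z mdeg_e D_zero DD_zero E_def Db_def Da_def DD_def mdeg_E)
  have v2: "DD (\<lambda>_. 0) = hess q a b"
    "Db (e s) = hess q s b" "Db (e t) = hess q t b" "Da (e s) = hess q s a" "Da (e t) = hess q t a"
    using q ab st
    by (simp_all add: form_zero mdeg_z mdeg_e D_zero DD_zero E_def Db_def Da_def DD_def mdeg_E DD_z D_e)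
  have vE: "q E = hess q s t / (if s = t then 2 else 1)" using st q_E E_def by blast
  show ?thesis
    unfolding E_def[symmetric] main pmult_at2[of _ _ s t, folded E_def]
    using v v2 vE by (cases "s = t") (simp_all add: field_simps)
qed



definition mm :: "(nat \<Rightarrow> nat \<Rightarrow> complex) \<Rightarrow> (nat \<Rightarrow> nat \<Rightarrow> complex) \<Rightarrow> nat \<Rightarrow> nat \<Rightarrow> complex" where
  "mm A B i j = (\<Sum>k<4. A i k * B k j)"

lemma mm_assoc: "mm (mm A B) C = mm A (mm B C)"
proof (intro ext)
  fix i j
  have "mm (mm A B) C i j = (\<Sum>k<4. \<Sum>l<4. A i l * B l k * C k j)"
    by (simp add: mm_def sum_distrib_right)
  also have "\<dots> = (\<Sum>l<4. \<Sum>k<4. A i l * B l k * C k j)"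
    by (rule sum.swap)
  also have "\<dots> = mm A (mm B C) i j"
    by (simp add: mm_def sum_distrib_left mult.assoc)
  finally show "mm (mm A B) C i j = mm A (mm B C) i j" .
qed

lemma mm_id_left:
  assumes "\<And>i k. i < 4 \<Longrightarrow> k < 4 \<Longrightarrow> A i k = (if i = k then 1 else 0)" "i < 4"
  shows "mm A B i j = B i j"
proof -
  have "mm A B i j = (\<Sum>k<4. if k = i then B k j else 0)"
    unfolding mm_def by (rule sum.cong) (auto simp: assms)
  also have "\<dots> = B i j" using assms(2) by (simp add: sum.delta)
  finally show ?thesis .
qed

lemma mm_id_right:
  assumes "\<And>k j. k < 4 \<Longrightarrow> j < 4 \<Longrightarrow> B k j = (if k = j then 1 else 0)" "j < 4"
  shows "mm A B i j = A i j"
proof -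
  have "mm A B i j = (\<Sum>k<4. if k = j then A i k else 0)"
    unfolding mm_def by (rule sum.cong) (auto simp: assms)
  also have "\<dots> = A i j" using assms(2) by (simp add: sum.delta)
  finally show ?thesis .
qed

lemma form_var: "i < 4 \<Longrightarrow> is_form 1 (var i)"
  by (auto simp: is_form_def var_e is_mono_e mdeg_e)

lemma form_D:
  assumes f: "is_form (Suc d) f" and i: "i < 4"
  shows "is_form d (act (var i) f)"
  unfolding is_form_def
proof (intro allI impI)
  fix c assume "act (var i) f c \<noteq> 0"
  then have "f (ad c (e i)) \<noteq> 0" using i by (simp add: act_var)
  then have m: "is_mono (ad c (e i))" "mdeg (ad c (e i)) = Suc d" using f by (auto simp: is_form_def)
  have "is_mono c" using m(1) by (simp add: is_mono_def ad_def)
  moreover have "mdeg c = d" using m(2) i by (simp add: mdeg_ad mdeg_e)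
  ultimately show "is_mono c \<and> mdeg c = d" by simp
qed

lemma form_act_lin:
  assumes u: "is_form 1 u" and r: "is_form 2 r"
  shows "is_form 1 (act u r)"
  unfolding is_form_def
proof (intro allI impI)
  fix c assume "act u r c \<noteq> 0"
  then have "(\<Sum>j<4. u (e j) * act (var j) r c) \<noteq> 0" using act_lin[OF u] by simp
  then obtain j where j: "j < 4" "act (var j) r c \<noteq> 0"
    by (metis (no_types, lifting) lessThan_iff mult_zero_right sum.neutral)
  have "is_form 1 (act (var j) r)" using form_D[of 1 r j] r j by (simp add: numeral_2_eq_2)
  then show "is_mono c \<and> mdeg c = 1" using j by (auto simp: is_form_def)
qed

lemma pmult11_zero:
  assumes u: "is_form 1 u" and w: "is_form 1 w"
    and m: "\<not> (\<exists>s<4. \<exists>t<4. m = ad (e s) (e t))"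
  shows "pmult u w m = 0"
  unfolding pmult_alt
proof (rule sum.neutral, rule ballI)
  fix b assume b: "b \<in> {b. le b m}"
  show "u b * w (sb m b) = 0"
  proof (rule ccontr)
    assume "u b * w (sb m b) \<noteq> 0"
    then have "u b \<noteq> 0" "w (sb m b) \<noteq> 0" by auto
    then obtain s t where st: "s < 4" "t < 4" "b = e s" "sb m b = e t"
      using u w mono1 unfolding is_form_def by metis
    have "m = ad b (sb m b)" using b by (auto simp: le_def ad_def sb_def fun_eq_iff)
    then show False using st m by auto
  qed
qed

lemma form2_zero:
  assumes g: "is_form 2 g" and m: "\<not> (\<exists>s<4. \<exists>t<4. m = ad (e s) (e t))"
  shows "g m = 0"
proof (rule ccontr)
  assume "g m \<noteq> 0"
  then have "is_mono m" "mdeg m = 2" using g by (auto simp: is_form_def)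
  then show False using mono2 m by blast
qed

lemma lin_vals:
  assumes "is_form 1 u" "s < 4" "t < 4"
  shows "u (\<lambda>_. 0) = 0" "u (ad (e s) (e t)) = 0"
  using assms by (simp_all add: form_zero mdeg_z mdeg_E)



theorem lemma4p8:
  fixes q r l ql :: cpoly
  assumes "is_form 2 q" and "qf_rank4 q"
    and "is_inv_quadric q r"
    and "is_form 1 l"
    and "is_form 2 ql" and "act ql (pmult q q) = pmult l l"
  shows "(\<exists>a b. ql = (\<lambda>m. a * r m + b * pmult (act l r) (act l r) m))
       \<and> (\<forall>v. peval (act l r) v = 0 \<and> peval r v = 0 \<longrightarrow>
            (\<exists>c d. (c, d) \<noteq> (0, 0) \<and>
               (\<forall>i<4. c * peval (act (var i) ql) v + d * peval (act (var i) r) v = 0)))"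
proof -
  have q2: "is_form 2 q" and l1: "is_form 1 l" and ql2: "is_form 2 ql" using assms by auto
  have r2: "is_form 2 r" and inv1: "\<And>g. is_form 1 g \<Longrightarrow> act (act g q) r = g"
    and inv2: "\<And>g. is_form 1 g \<Longrightarrow> act (act g r) q = g"
    using assms(3) by (auto simp: is_inv_quadric_def)
  define H where "H = hess q"
  define R where "R = hess r"
  define G where "G = hess ql"
  define L where "L j = l (e j)" for j
  define p where "p = act l r"
  define P where "P k = (\<Sum>j<4. L j * R k j)" for k
  define \<tau> where "\<tau> = (\<Sum>a<4. \<Sum>b<4. G a b * H a b)"
  have Hs: "H a b = H b a" if "a < 4" "b < 4" for a b using that hess_sym H_def by blast
  have Rs: "R a b = R b a" if "a < 4" "b < 4" for a b using that hess_sym R_def by blast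
  have Gs: "G a b = G b a" if "a < 4" "b < 4" for a b using that hess_sym G_def by blast
  have q1D: "is_form 1 (act (var k) q)" if "k < 4" for k
    using form_D[of 1 q k] q2 that by (simp add: numeral_2_eq_2)
  have r1D: "is_form 1 (act (var k) r)" if "k < 4" for k
    using form_D[of 1 r k] r2 that by (simp add: numeral_2_eq_2)
  have ql1D: "is_form 1 (act (var k) ql)" if "k < 4" for k
    using form_D[of 1 ql k] ql2 that by (simp add: numeral_2_eq_2)
  have A1: "mm R H i k = (if i = k then 1 else 0)" if "i < 4" "k < 4" for i k
  proof -
    have "act (act (var k) q) r (e i) = var k (e i)" using inv1[OF form_var[OF that(2)]] by simp
    moreover have "act (act (var k) q) r (e i) = (\<Sum>j<4. H j k * R i j)"
      unfolding act_lin[OF q1D[OF that(2)]] H_def R_def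
      by (rule sum.cong) (simp_all add: D_e that)
    moreover have "var k (e i) = (if i = k then 1 else 0)" by (simp add: var_e e_inj)
    ultimately show ?thesis by (simp add: mm_def mult.commute)
  qed
  have A2: "mm H R i k = (if i = k then 1 else 0)" if "i < 4" "k < 4" for i k
  proof -
    have "act (act (var k) r) q (e i) = var k (e i)" using inv2[OF form_var[OF that(2)]] by simp
    moreover have "act (act (var k) r) q (e i) = (\<Sum>j<4. R j k * H i j)"
      unfolding act_lin[OF r1D[OF that(2)]] H_def R_def
      by (rule sum.cong) (simp_all add: D_e that)
    moreover have "var k (e i) = (if i = k then 1 else 0)" by (simp add: var_e e_inj)
    ultimately show ?thesis by (simp add: mm_def mult.commute)
  qed
  define ms where "ms s t = (if s = t then 2 else (1::complex))" for s t :: nat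
  have ms0: "ms s t \<noteq> 0" for s t by (simp add: ms_def)
  have eq: "(\<Sum>a<4. \<Sum>b<4. G a b * (H a b * H s t + H s a * H t b + H s b * H t a)) = 2 * L s * L t"
    if st: "s < 4" "t < 4" for s t
  proof -
    have "act ql (pmult q q) (ad (e s) (e t)) = pmult l l (ad (e s) (e t))" using assms(6) by simp
    moreover have "act ql (pmult q q) (ad (e s) (e t)) =
        (\<Sum>a<4. \<Sum>b<4. G a b * (H a b * H s t + H s a * H t b + H s b * H t a)) / ms s t"
      unfolding act_quad[OF ql2] sum_divide_distrib
      by (intro sum.cong refl) (simp add: DDqq q2 st G_def H_def ms_def)
    moreover have "pmult l l (ad (e s) (e t)) = 2 * L s * L t / ms s t"
      unfolding pmult_at2 using lin_vals[OF l1 st] by (simp add: L_def ms_def)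
    ultimately show ?thesis using ms0[of s t] by (simp add: divide_cancel_right)
  qed
  have Meq: "mm H (mm G H) s t = L s * L t - \<tau> / 2 * H s t" if st: "s < 4" "t < 4" for s t
  proof -
    have S1: "mm H (mm G H) s t = (\<Sum>a<4. \<Sum>b<4. G a b * (H s a * H t b))"
      unfolding mm_def sum_distrib_left
      by (intro sum.cong refl) (simp add: Hs[of _ t] st)
    have "(\<Sum>a<4. \<Sum>b<4. G a b * (H s b * H t a)) = (\<Sum>b<4. \<Sum>a<4. G a b * (H s b * H t a))"
      by (rule sum.swap)
    also have "\<dots> = (\<Sum>a<4. \<Sum>b<4. G a b * (H s a * H t b))"
      by (intro sum.cong refl) (simp add: Gs)
    finally have S2: "(\<Sum>a<4. \<Sum>b<4. G a b * (H s b * H t a)) = mm H (mm G H) s t" using S1 by simp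
    have S3: "(\<Sum>a<4. \<Sum>b<4. G a b * (H a b * H s t)) = \<tau> * H s t"
      by (simp add: \<tau>_def sum_distrib_right mult.assoc)
    have "(\<Sum>a<4. \<Sum>b<4. G a b * (H a b * H s t + H s a * H t b + H s b * H t a)) =
        (\<Sum>a<4. \<Sum>b<4. G a b * (H a b * H s t)) + (\<Sum>a<4. \<Sum>b<4. G a b * (H s a * H t b))
        + (\<Sum>a<4. \<Sum>b<4. G a b * (H s b * H t a))"
      by (simp add: distrib_left sum.distrib)
    then have "\<tau> * H s t + 2 * mm H (mm G H) s t = 2 * L s * L t"
      using eq[OF st] S1 S2 S3 by simp
    then show ?thesis by (simp add: field_simps)
  qed
  have Gform: "G s t = P s * P t - \<tau> / 2 * R s t" if st: "s < 4" "t < 4" for s t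
  proof -
    have "mm R (mm (mm H (mm G H)) R) s t = mm (mm R H) (mm G (mm H R)) s t"
      by (simp add: mm_assoc)
    also have "\<dots> = mm G (mm H R) s t" by (rule mm_id_left[OF A1 st(1)])
    also have "\<dots> = G s t" by (rule mm_id_right[OF A2 st(2)])
    finally have X1: "mm R (mm (mm H (mm G H)) R) s t = G s t" .
    have inner: "mm (mm H (mm G H)) R x t = L x * P t - \<tau> / 2 * (if x = t then 1 else 0)" if x: "x < 4" for x
    proof -
      have "mm (mm H (mm G H)) R x t = (\<Sum>y<4. (L x * L y - \<tau> / 2 * H x y) * R y t)"
        unfolding mm_def[of "mm H (mm G H)"] by (intro sum.cong refl) (simp add: Meq x)
      also have "\<dots> = L x * (\<Sum>y<4. L y * R y t) - \<tau> / 2 * mm H R x t"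
        by (simp add: mm_def algebra_simps sum_subtractf sum_distrib_left)
      also have "(\<Sum>y<4. L y * R y t) = P t"
        unfolding P_def by (intro sum.cong refl) (simp add: Rs st)
      finally show ?thesis using A2[OF x st(2)] by simp
    qed
    have "mm R (mm (mm H (mm G H)) R) s t = (\<Sum>x<4. R s x * (L x * P t - \<tau> / 2 * (if x = t then 1 else 0)))"
      unfolding mm_def[of R] by (intro sum.cong refl) (simp add: inner)
    also have "\<dots> = (\<Sum>x<4. R s x * L x * P t - \<tau> / 2 * (if x = t then R s x else 0))"
      by (intro sum.cong refl) (simp add: algebra_simps)
    also have "\<dots> = (\<Sum>x<4. R s x * L x) * P t - \<tau> / 2 * (\<Sum>x<4. if x = t then R s x else 0)"
      by (simp only: sum_subtractf sum_distrib_left sum_distrib_right)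
    also have "\<dots> = P s * P t - \<tau> / 2 * R s t"
      using st by (simp add: P_def sum.delta mult.commute)
    finally show ?thesis using X1 by simp
  qed
  have p1: "is_form 1 p" unfolding p_def by (rule form_act_lin[OF l1 r2])
  have pe: "p (e k) = P k" if "k < 4" for k
    unfolding p_def act_lin[OF l1] P_def L_def R_def
    by (intro sum.cong refl) (simp add: D_e that)
  have C1: "ql = (\<lambda>m. (- \<tau> / 2) * r m + (1/2) * pmult p p m)"
  proof
    fix m
    show "ql m = (- \<tau> / 2) * r m + (1/2) * pmult p p m"
    proof (cases "\<exists>s<4. \<exists>t<4. m = ad (e s) (e t)")
      case True
      then obtain s t where st: "s < 4" "t < 4" and m: "m = ad (e s) (e t)" by blast
      have hq: "ql m = G s t / ms s t" using q_E[OF st, of ql] by (simp add: m G_def ms_def)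
      have hr: "r m = R s t / ms s t" using q_E[OF st, of r] by (simp add: m R_def ms_def)
      have hp: "pmult p p m = (if s = t then P s * P s else 2 * P s * P t)"
        unfolding m pmult_at2 using lin_vals[OF p1 st] by (simp add: pe st)
      show ?thesis unfolding hq hr hp using Gform[OF st]
        by (cases "s = t") (simp_all add: ms_def field_simps)
    next
      case False
      then show ?thesis
        using form2_zero[OF ql2 False] form2_zero[OF r2 False] pmult11_zero[OF p1 p1 False] by simp
    qed
  qed
  have C2: "\<exists>c d. (c, d) \<noteq> (0, 0) \<and>
               (\<forall>i<4. c * peval (act (var i) ql) v + d * peval (act (var i) r) v = 0)"
    if pv: "peval (act l r) v = 0" for v
  proof (intro exI conjI allI impI)
    show "(1::complex, \<tau> / 2) \<noteq> (0, 0)" by simp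
    fix i :: nat assume i: "i < 4"
    have pv': "(\<Sum>j<4. P j * v j) = 0"
      using pv unfolding p_def[symmetric] peval_lin[OF p1] by (simp add: pe)
    have e1: "peval (act (var i) ql) v = (\<Sum>j<4. (P j * P i - \<tau> / 2 * R j i) * v j)"
      unfolding peval_lin[OF ql1D[OF i]] by (intro sum.cong refl) (simp add: D_e i Gform G_def[symmetric])
    have e2: "peval (act (var i) r) v = (\<Sum>j<4. R j i * v j)"
      unfolding peval_lin[OF r1D[OF i]] by (intro sum.cong refl) (simp add: D_e i R_def)
    have "(\<Sum>j<4. (P j * P i - \<tau> / 2 * R j i) * v j) + \<tau> / 2 * (\<Sum>j<4. R j i * v j)
        = P i * (\<Sum>j<4. P j * v j)"
      by (simp add: algebra_simps sum_subtractf sum_distrib_left sum.distrib)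
    then show "1 * peval (act (var i) ql) v + \<tau> / 2 * peval (act (var i) r) v = 0"
      using e1 e2 pv' by simp
  qed
  show ?thesis
  proof
    show "\<exists>a b. ql = (\<lambda>m. a * r m + b * pmult (act l r) (act l r) m)"
      using C1 unfolding p_def by blast
    show "\<forall>v. peval (act l r) v = 0 \<and> peval r v = 0 \<longrightarrow>
            (\<exists>c d. (c, d) \<noteq> (0, 0) \<and>
               (\<forall>i<4. c * peval (act (var i) ql) v + d * peval (act (var i) r) v = 0))"
      using C2 by blast
  qed
qed

end
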